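(* Let $\mathbb{F}\in\{\mathbb{R},\mathbb{C}\}$. If $S\in\mathsf{GL}_m(\mathbb{F})$ and $T\in\mathsf{GL}_n(\mathbb{F})$ are ideal, then $S\otimes T$ is ideal.
   Context: For $x\in\mathbb{F}^n$, $D_x$ is the diagonal matrix with $(i,i)$-entry $x_i$; $M\ge0$ means every entry of $M$ is a nonnegative real number. For $S\in\mathsf{GL}_n(\mathbb{F})$, $\mathcal{C}(S)=\{x\in\mathbb{F}^n\mid SD_xS^{-1}\ge 0\}$, and $\mathcal{C}_r(S)$ denotes the conical hull (set of nonnegative real linear combinations) of the rows of $S$, viewed as vectors in $\mathbb{F}^n$. An invertible $S$ is a Perron similarity if for some $i$ the column $Se_i$ and the row $e_i^\top S^{-1}$ are both entrywise nonnegative or both entrywise nonpositive (real). A Perron similarity $S$ is called ideal if $\mathcal{C}(S)=\mathcal{C}_r(S)$. $\otimes$ is the Kronecker product. *)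

theory Defs
  imports "HOL-Analysis.Analysis"
begin

text \<open>Matrices over F are square matrices 'a^'n^'n indexed by a finite type 'n;
  F is real or complex (we work over any real algebra, using of_real to
  identify the nonnegative reals inside F).\<close>

definition nonneg_entry :: "'a::real_algebra_1 \<Rightarrow> bool" where
  "nonneg_entry z \<longleftrightarrow> (\<exists>r::real. r \<ge> 0 \<and> z = of_real r)"

definition nonpos_entry :: "'a::real_algebra_1 \<Rightarrow> bool" where
  "nonpos_entry z \<longleftrightarrow> (\<exists>r::real. r \<le> 0 \<and> z = of_real r)"

definition mat_nonneg :: "'a::real_algebra_1^'n^'m \<Rightarrow> bool" where
  "mat_nonneg M \<longleftrightarrow> (\<forall>i j. nonneg_entry (M $ i $ j))"

definition diag_vec :: "'a::zero^'n \<Rightarrow> 'a^'n^'n" where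
  "diag_vec x = (\<chi> i j. if i = j then x $ i else 0)"

definition spec_cone :: "'a::{real_algebra_1,comm_ring_1}^'n^'n \<Rightarrow> ('a^'n) set" where
  "spec_cone S = {x. mat_nonneg (S ** diag_vec x ** matrix_inv S)}"

definition row_cone :: "'a::real_algebra_1^'n^'n \<Rightarrow> ('a^'n) set" where
  "row_cone S = {x. \<exists>c::'n \<Rightarrow> real. (\<forall>i. c i \<ge> 0) \<and> x = (\<Sum>i\<in>UNIV. c i *\<^sub>R row i S)}"

definition perron_similarity :: "'a::{real_algebra_1,comm_ring_1}^'n^'n \<Rightarrow> bool" where
  "perron_similarity S \<longleftrightarrow> invertible S \<and>
     (\<exists>i. ((\<forall>j. nonneg_entry (S $ j $ i)) \<and> (\<forall>j. nonneg_entry (matrix_inv S $ i $ j)))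
        \<or> ((\<forall>j. nonpos_entry (S $ j $ i)) \<and> (\<forall>j. nonpos_entry (matrix_inv S $ i $ j))))"

definition ideal_ps :: "'a::{real_algebra_1,comm_ring_1}^'n^'n \<Rightarrow> bool" where
  "ideal_ps S \<longleftrightarrow> perron_similarity S \<and> spec_cone S = row_cone S"

text \<open>Kronecker product; index (i,k) of the product type corresponds to the
  usual lexicographic row index of S \<otimes> T.\<close>
definition kron :: "'a::times^'m^'m \<Rightarrow> 'a^'n^'n \<Rightarrow> 'a^('m \<times> 'n)^('m \<times> 'n)" where
  "kron S T = (\<chi> p q. S $ fst p $ fst q * T $ snd p $ snd q)"

end

theory Submission
  imports Defs
begin

lemma inv_props:
  fixes S :: "'a::{real_algebra_1,comm_ring_1}^'n^'n"
  assumes "invertible S"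
  shows "S ** matrix_inv S = mat 1" "matrix_inv S ** S = mat 1"
proof -
  have "\<exists>A'. S ** A' = mat 1 \<and> A' ** S = mat 1" using assms by (simp add: invertible_def)
  then have "S ** matrix_inv S = mat 1 \<and> matrix_inv S ** S = mat 1"
    unfolding matrix_inv_def by (rule someI_ex)
  then show "S ** matrix_inv S = mat 1" "matrix_inv S ** S = mat 1" by auto
qed

lemma inv_unique:
  fixes S :: "'a::{real_algebra_1,comm_ring_1}^'n^'n"
  assumes "S ** B = mat 1" "B ** S = mat 1"
  shows "invertible S" "matrix_inv S = B"
proof -
  show inv: "invertible S" using assms invertible_def by blast
  have "matrix_inv S = matrix_inv S ** (S ** B)" using assms by simp
  also have "\<dots> = (matrix_inv S ** S) ** B" by (simp add: matrix_mul_assoc)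
  also have "\<dots> = B" using inv_props(2)[OF inv] by simp
  finally show "matrix_inv S = B" .
qed

lemma entry_eq:
  fixes S :: "'a::{real_algebra_1,comm_ring_1}^'n^'n"
  assumes "S ** B = mat 1"
  shows "(\<Sum>j\<in>UNIV. S$i$j * B$j$k) = (if i = k then 1 else 0)"
proof -
  have "(S ** B) $ i $ k = mat 1 $ i $ k" using assms by simp
  then show ?thesis by (simp add: matrix_matrix_mult_def mat_def)
qed

lemma conj_entry:
  fixes S :: "'a::{real_algebra_1,comm_ring_1}^'n^'n"
  shows "(S ** diag_vec x ** B) $ i $ k = (\<Sum>j\<in>UNIV. S$i$j * x$j * B$j$k)"
proof -
  have "(S ** diag_vec x ** B) $ i $ k = (\<Sum>j\<in>UNIV. (\<Sum>l\<in>UNIV. S$i$l * (if l = j then x$l else 0)) * B$j$k)"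
    by (simp add: matrix_matrix_mult_def diag_vec_def)
  also have "\<dots> = (\<Sum>j\<in>UNIV. S$i$j * x$j * B$j$k)"
    by (simp add: if_distrib cong: if_cong)
  finally show ?thesis .
qed

lemma sum_pair:
  fixes f :: "'m::finite \<times> 'n::finite \<Rightarrow> 'a::comm_monoid_add"
  shows "(\<Sum>r\<in>UNIV. f r) = (\<Sum>j\<in>UNIV. \<Sum>l\<in>UNIV. f (j,l))"
  by (simp add: sum.cartesian_product UNIV_Times_UNIV[symmetric] del: UNIV_Times_UNIV)

lemma nn_mult: "nonneg_entry (a::'a::real_algebra_1) \<Longrightarrow> nonneg_entry b \<Longrightarrow> nonneg_entry (a*b)"
  unfolding nonneg_entry_def by (metis mult_nonneg_nonneg of_real_mult)
lemma np_mult: "nonpos_entry (a::'a::real_algebra_1) \<Longrightarrow> nonpos_entry b \<Longrightarrow> nonneg_entry (a*b)"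
  unfolding nonneg_entry_def nonpos_entry_def by (metis mult_nonpos_nonpos of_real_mult)
lemma nnp_mult: "nonneg_entry (a::'a::real_algebra_1) \<Longrightarrow> nonpos_entry b \<Longrightarrow> nonpos_entry (a*b)"
  unfolding nonneg_entry_def nonpos_entry_def by (metis mult_nonneg_nonpos of_real_mult)
lemma pnn_mult: "nonpos_entry (a::'a::real_algebra_1) \<Longrightarrow> nonneg_entry b \<Longrightarrow> nonpos_entry (a*b)"
  unfolding nonneg_entry_def nonpos_entry_def by (metis mult_nonpos_nonneg of_real_mult)
lemma nn_sum: "(\<And>i. i \<in> A \<Longrightarrow> nonneg_entry (f i :: 'a::real_algebra_1)) \<Longrightarrow> nonneg_entry (sum f A)"
proof (induction A rule: infinite_finite_induct)
  case (infinite A) then show ?case by (auto simp: nonneg_entry_def intro!: exI[of _ 0])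
next
  case empty then show ?case by (auto simp: nonneg_entry_def intro!: exI[of _ 0])
next
  case (insert x F)
  then obtain r s where "r \<ge> 0" "f x = of_real r" "s \<ge> 0" "sum f F = of_real s"
    unfolding nonneg_entry_def by blast
  then show ?case using insert by (simp add: nonneg_entry_def) (metis add_nonneg_nonneg of_real_add)
qed
lemma nn_scale: "nonneg_entry (a::'a::real_algebra_1) \<Longrightarrow> (c::real) \<ge> 0 \<Longrightarrow> nonneg_entry (c *\<^sub>R a)"
  unfolding nonneg_entry_def by (metis mult_nonneg_nonneg of_real_mult scaleR_conv_of_real)


lemma row_cone_iff:
  fixes S :: "'a::{real_algebra_1,comm_ring_1}^'n^'n"
  assumes inv: "invertible S"
  shows "x \<in> row_cone S \<longleftrightarrow> (\<forall>i. nonneg_entry (\<Sum>j\<in>UNIV. x$j * matrix_inv S$j$i))"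
proof
  assume "x \<in> row_cone S"
  then obtain c where c: "\<forall>i. c i \<ge> 0" "x = (\<Sum>i\<in>UNIV. c i *\<^sub>R row i S)"
    unfolding row_cone_def by blast
  show "\<forall>i. nonneg_entry (\<Sum>j\<in>UNIV. x$j * matrix_inv S$j$i)"
  proof
    fix i
    have "(\<Sum>j\<in>UNIV. x$j * matrix_inv S$j$i)
        = (\<Sum>j\<in>UNIV. \<Sum>a\<in>UNIV. c a *\<^sub>R (S$a$j * matrix_inv S$j$i))"
      by (simp add: c(2) row_def sum_distrib_right)
    also have "\<dots> = (\<Sum>a\<in>UNIV. c a *\<^sub>R (\<Sum>j\<in>UNIV. S$a$j * matrix_inv S$j$i))"
      by (subst sum.swap) (simp add: scaleR_sum_right)
    also have "\<dots> = (\<Sum>a\<in>UNIV. c a *\<^sub>R (if a = i then 1 else 0))"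
      by (simp add: entry_eq[OF inv_props(1)[OF inv]])
    also have "\<dots> = of_real (c i)"
      by (simp add: if_distrib cong: if_cong) (simp add: scaleR_conv_of_real)
    finally show "nonneg_entry (\<Sum>j\<in>UNIV. x$j * matrix_inv S$j$i)"
      using c(1) by (auto simp: nonneg_entry_def)
  qed
next
  assume H: "\<forall>i. nonneg_entry (\<Sum>j\<in>UNIV. x$j * matrix_inv S$j$i)"
  then have "\<forall>i. \<exists>r. r \<ge> 0 \<and> (\<Sum>j\<in>UNIV. x$j * matrix_inv S$j$i) = of_real r"
    by (simp add: nonneg_entry_def)
  then obtain c where c: "\<And>i. c i \<ge> 0" "\<And>i. (\<Sum>j\<in>UNIV. x$j * matrix_inv S$j$i) = of_real (c i)"
    by metis
  have "x = (\<Sum>i\<in>UNIV. c i *\<^sub>R row i S)"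
  proof (subst vec_eq_iff, intro allI)
    fix r
    have "(\<Sum>i\<in>UNIV. c i *\<^sub>R row i S) $ r = (\<Sum>i\<in>UNIV. of_real (c i) * S$i$r)"
      by (simp add: row_def) (simp add: scaleR_conv_of_real)
    also have "\<dots> = (\<Sum>i\<in>UNIV. \<Sum>j\<in>UNIV. x$j * (matrix_inv S$j$i * S$i$r))"
      by (simp add: c(2)[symmetric] sum_distrib_right mult.assoc)
    also have "\<dots> = (\<Sum>j\<in>UNIV. x$j * (\<Sum>i\<in>UNIV. matrix_inv S$j$i * S$i$r))"
      by (subst sum.swap) (simp add: sum_distrib_left)
    also have "\<dots> = x $ r"
      by (simp add: entry_eq[OF inv_props(2)[OF inv]] if_distrib cong: if_cong)
    finally show "x $ r = (\<Sum>i\<in>UNIV. c i *\<^sub>R row i S) $ r" by simp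
  qed
  then show "x \<in> row_cone S" using c(1) unfolding row_cone_def by blast
qed

lemma spec_iff:
  fixes S :: "'a::{real_algebra_1,comm_ring_1}^'n^'n"
  shows "x \<in> spec_cone S \<longleftrightarrow> (\<forall>i k. nonneg_entry (\<Sum>j\<in>UNIV. S$i$j * x$j * matrix_inv S$j$k))"
  by (simp add: spec_cone_def mat_nonneg_def conj_entry)

lemma kron_mult:
  fixes A C :: "'a::{real_algebra_1,comm_ring_1}^'m^'m" and B D :: "'a^'n^'n"
  shows "kron A B ** kron C D = kron (A ** C) (B ** D)"
proof -
  have "\<And>p q. (\<Sum>r\<in>UNIV. A $ fst p $ fst r * B $ snd p $ snd r * (C $ fst r $ fst q * D $ snd r $ snd q))
     = (\<Sum>j\<in>UNIV. A $ fst p $ j * C $ j $ fst q) * (\<Sum>l\<in>UNIV. B $ snd p $ l * D $ l $ snd q)"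
    by (simp add: sum_pair sum_product mult.commute mult.left_commute)
  then show ?thesis by (simp add: kron_def matrix_matrix_mult_def)
qed

lemma kron_one: "kron (mat 1 :: 'a::{real_algebra_1,comm_ring_1}^'m^'m) (mat 1 :: 'a^'n^'n) = mat 1"
  by (auto simp: kron_def mat_def vec_eq_iff prod_eq_iff)

lemma kron_inv:
  fixes S :: "'a::{real_algebra_1,comm_ring_1}^'m^'m" and T :: "'a^'n^'n"
  assumes "invertible S" "invertible T"
  shows "invertible (kron S T)" "matrix_inv (kron S T) = kron (matrix_inv S) (matrix_inv T)"
  using inv_unique[of "kron S T" "kron (matrix_inv S) (matrix_inv T)"]
  by (simp_all add: kron_mult inv_props assms kron_one)

lemma row_in_spec:
  fixes S :: "'a::{real_algebra_1,comm_ring_1}^'n^'n"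
  assumes "ideal_ps S"
  shows "nonneg_entry (\<Sum>j\<in>UNIV. S$i$j * S$a$j * matrix_inv S$j$k)"
proof -
  have "row a S \<in> row_cone S"
    unfolding row_cone_def
  proof (rule CollectI, rule exI[of _ "\<lambda>i. if i = a then 1 else 0"], intro conjI allI)
    have "(\<Sum>i\<in>UNIV. (if i = a then 1::real else 0) *\<^sub>R row i S) = (\<Sum>i\<in>UNIV. if i = a then row i S else 0)"
      by (rule sum.cong) auto
    then show "row a S = (\<Sum>i\<in>UNIV. (if i = a then 1::real else 0) *\<^sub>R row i S)" by simp
  qed auto
  then have "row a S \<in> spec_cone S" using assms by (simp add: ideal_ps_def)
  then show ?thesis by (simp add: spec_iff row_def)
qed


lemma kron_perron:
  fixes S :: "'a::{real_algebra_1,comm_ring_1}^'m^'m" and T :: "'a^'n^'n"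
  assumes "perron_similarity S" "perron_similarity T"
  shows "perron_similarity (kron S T)"
proof -
  have iS: "invertible S" and iT: "invertible T" using assms by (auto simp: perron_similarity_def)
  obtain i where hi: "((\<forall>j. nonneg_entry (S $ j $ i)) \<and> (\<forall>j. nonneg_entry (matrix_inv S $ i $ j)))
        \<or> ((\<forall>j. nonpos_entry (S $ j $ i)) \<and> (\<forall>j. nonpos_entry (matrix_inv S $ i $ j)))"
    using assms(1) by (auto simp: perron_similarity_def)
  obtain k where hk: "((\<forall>j. nonneg_entry (T $ j $ k)) \<and> (\<forall>j. nonneg_entry (matrix_inv T $ k $ j)))
        \<or> ((\<forall>j. nonpos_entry (T $ j $ k)) \<and> (\<forall>j. nonpos_entry (matrix_inv T $ k $ j)))"
    using assms(2) by (auto simp: perron_similarity_def)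
  have ex: "((\<forall>j. nonneg_entry (kron S T $ j $ (i,k))) \<and> (\<forall>j. nonneg_entry (matrix_inv (kron S T) $ (i,k) $ j)))
        \<or> ((\<forall>j. nonpos_entry (kron S T $ j $ (i,k))) \<and> (\<forall>j. nonpos_entry (matrix_inv (kron S T) $ (i,k) $ j)))"
    using hi hk unfolding kron_inv(2)[OF iS iT]
    by (auto simp: kron_def intro: nn_mult np_mult nnp_mult pnn_mult)
  show ?thesis unfolding perron_similarity_def using kron_inv(1)[OF iS iT] ex by blast
qed

lemma kron_ideal:
  fixes S :: "'a::{real_algebra_1,comm_ring_1}^'m^'m" and T :: "'a^'n^'n"
  assumes S: "ideal_ps S" and T: "ideal_ps T"
  shows "ideal_ps (kron S T)"
proof -
  have iS: "invertible S" and iT: "invertible T" using S T by (auto simp: ideal_ps_def perron_similarity_def)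
  define Si where "Si = matrix_inv S"
  define Ti where "Ti = matrix_inv T"
  have Ki: "matrix_inv (kron S T) = kron Si Ti" using kron_inv(2)[OF iS iT] by (simp add: Si_def Ti_def)
  have iK: "invertible (kron S T)" using kron_inv(1)[OF iS iT] .
  have sS: "spec_cone S = row_cone S" and sT: "spec_cone T = row_cone T"
    using S T by (auto simp: ideal_ps_def)
  have "spec_cone (kron S T) = row_cone (kron S T)"
  proof (intro set_eqI iffI)
    fix z assume "z \<in> spec_cone (kron S T)"
    then have H: "\<And>p q. nonneg_entry (\<Sum>r\<in>UNIV. kron S T $ p $ r * z $ r * kron Si Ti $ r $ q)"
      unfolding spec_iff Ki by blast
    have "\<forall>q. nonneg_entry (\<Sum>r\<in>UNIV. z$r * kron Si Ti $ r $ q)"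
    proof
      fix q :: "'m \<times> 'n"
      obtain i k where q: "q = (i,k)" by (cases q)
      define u where "u = (\<chi> l. \<Sum>j\<in>UNIV. z$(j,l) * Si$j$i)"
      have "u \<in> spec_cone T"
        unfolding spec_iff Ti_def[symmetric]
      proof (intro allI)
        fix k1 k2
        define w where "w = (\<chi> j. \<Sum>l\<in>UNIV. T$k1$l * z$(j,l) * Ti$l$k2)"
        have "w \<in> spec_cone S"
          unfolding spec_iff Si_def[symmetric]
        proof (intro allI)
          fix a1 a2
          have "(\<Sum>j\<in>UNIV. S$a1$j * w$j * Si$j$a2)
              = (\<Sum>r\<in>UNIV. kron S T $ (a1,k1) $ r * z $ r * kron Si Ti $ r $ (a2,k2))"
            by (simp add: w_def sum_pair kron_def sum_distrib_left sum_distrib_right mult.commute mult.left_commute)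
          then show "nonneg_entry (\<Sum>j\<in>UNIV. S$a1$j * w$j * Si$j$a2)" using H by simp
        qed
        then have "w \<in> row_cone S" using sS by simp
        then have "nonneg_entry (\<Sum>j\<in>UNIV. w$j * Si$j$i)"
          using row_cone_iff[OF iS] by (simp add: Si_def)
        moreover have "(\<Sum>j\<in>UNIV. w$j * Si$j$i) = (\<Sum>l\<in>UNIV. T$k1$l * u$l * Ti$l$k2)"
          by (simp add: w_def u_def sum_distrib_left sum_distrib_right mult.commute mult.left_commute)
             (rule sum.swap)
        ultimately show "nonneg_entry (\<Sum>l\<in>UNIV. T$k1$l * u$l * Ti$l$k2)" by simp
      qed
      then have "u \<in> row_cone T" using sT by simp
      then have "nonneg_entry (\<Sum>l\<in>UNIV. u$l * Ti$l$k)"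
        using row_cone_iff[OF iT] by (simp add: Ti_def)
      moreover have "(\<Sum>l\<in>UNIV. u$l * Ti$l$k) = (\<Sum>r\<in>UNIV. z$r * kron Si Ti $ r $ q)"
        by (simp add: q u_def sum_pair kron_def sum_distrib_left sum_distrib_right mult.commute mult.left_commute)
           (rule sum.swap)
      ultimately show "nonneg_entry (\<Sum>r\<in>UNIV. z$r * kron Si Ti $ r $ q)" by simp
    qed
    then show "z \<in> row_cone (kron S T)" using row_cone_iff[OF iK] by (simp add: Ki)
  next
    fix z assume "z \<in> row_cone (kron S T)"
    then obtain c where c: "\<forall>q. c q \<ge> 0" "z = (\<Sum>q\<in>UNIV. c q *\<^sub>R row q (kron S T))"
      unfolding row_cone_def by blast
    have "\<And>p p'. nonneg_entry (\<Sum>r\<in>UNIV. kron S T $ p $ r * z $ r * kron Si Ti $ r $ p')"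
    proof -
      fix p p' :: "'m \<times> 'n"
      have "(\<Sum>r\<in>UNIV. kron S T $ p $ r * z $ r * kron Si Ti $ r $ p')
          = (\<Sum>q\<in>UNIV. c q *\<^sub>R (\<Sum>r\<in>UNIV. kron S T $ p $ r * kron S T $ q $ r * kron Si Ti $ r $ p'))"
        by (simp add: c(2) row_def scaleR_sum_right sum_distrib_left sum_distrib_right mult.commute mult.left_commute)
           (rule sum.swap)
      moreover have "nonneg_entry (\<Sum>r\<in>UNIV. kron S T $ p $ r * kron S T $ q $ r * kron Si Ti $ r $ p')" for q
      proof -
        have "(\<Sum>r\<in>UNIV. kron S T $ p $ r * kron S T $ q $ r * kron Si Ti $ r $ p')
          = (\<Sum>j\<in>UNIV. S$fst p$j * S$fst q$j * Si$j$fst p') * (\<Sum>l\<in>UNIV. T$snd p$l * T$snd q$l * Ti$l$snd p')"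
          by (simp add: sum_pair sum_product kron_def mult.commute mult.left_commute)
        then show ?thesis using row_in_spec[OF S] row_in_spec[OF T]
          by (simp add: Si_def Ti_def nn_mult)
      qed
      ultimately show "nonneg_entry (\<Sum>r\<in>UNIV. kron S T $ p $ r * z $ r * kron Si Ti $ r $ p')"
        using c(1) by (metis (no_types, lifting) nn_sum nn_scale)
    qed
    then show "z \<in> spec_cone (kron S T)" by (simp add: spec_iff Ki)
  qed
  then show ?thesis using S T kron_perron by (auto simp: ideal_ps_def)
qed


theorem theorem5p1:
  shows "(\<forall>(S::real^'m^'m) (T::real^'n^'n). ideal_ps S \<and> ideal_ps T \<longrightarrow> ideal_ps (kron S T))
       \<and> (\<forall>(S::complex^'m^'m) (T::complex^'n^'n). ideal_ps S \<and> ideal_ps T \<longrightarrow> ideal_ps (kron S T))"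
  by (intro conjI allI impI; rule kron_ideal; simp)

end
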